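(* Let $a=a(\hbar)$, $\hbar\in(0,1]$, be a bounded family in $S^0(\mathbb R^q\times\mathbb R^q;L^2(\mathbb R_+),L^2(\mathbb R_+))$, and let $a_\hbar(\hbar;y,\eta)=\kappa_\hbar^{-1}a(\hbar;y,\hbar\eta)\kappa_\hbar$. Then the family $a_\hbar$, $\hbar\in(0,1]$, is also bounded in $S^0(\mathbb R^q\times\mathbb R^q;L^2(\mathbb R_+),L^2(\mathbb R_+))$, and its seminorms can be estimated in terms of those of $a$.
   Context: The group action on $L^2(\mathbb R_+)$ is $(\kappa_\lambda u)(x)=\lambda^{1/2}u(\lambda x)$, $\lambda>0$ (unitary). $S^\mu(\mathbb R^q\times\mathbb R^q;E,F)$, for Banach spaces $E,F$ with strongly continuous $\mathbb R_+$-actions $\kappa,\tilde\kappa$, is the Fréchet space of $a\in\mathcal C^\infty(\mathbb R^q\times\mathbb R^q,\mathcal L(E,F))$ with seminorms $\sup_{y,\eta}\langle\eta\rangle^{-\mu+|\alpha|}\|\tilde\kappa_{\langle\eta\rangle^{-1}}D^\alpha_\eta D^\beta_ya(y,\eta)\kappa_{\langle\eta\rangle}\|$ finite, where $\langle\eta\rangle$ is a smooth positive function equal to $|\eta|$ for $|\eta|\ge1$. A family is bounded if each seminorm is bounded uniformly in $\hbar$. *)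

theory Defs
  imports "HOL-Analysis.Analysis"
begin

text \<open>A real normed space 'h is identified with L^2(R_+) (complex valued) through a
representation map U: each element x is represented by a measurable function U x on
the reals, only its values on (0,inf) matter, up to a.e. equality; U is linear a.e.,
isometric for the L^2 norm, and onto the square integrable functions.\<close>

definition L2_model :: "('h::real_normed_vector \<Rightarrow> real \<Rightarrow> complex) \<Rightarrow> bool" where
  "L2_model U \<longleftrightarrow>
     (\<forall>x. U x \<in> borel_measurable lborel
          \<and> set_integrable lborel {0<..} (\<lambda>t. (cmod (U x t))\<^sup>2)
          \<and> (norm x)\<^sup>2 = (LINT t:{0<..}|lborel. (cmod (U x t))\<^sup>2))
   \<and> (\<forall>x y. AE t in lborel. t > 0 \<longrightarrow> U (x + y) t = U x t + U y t)
   \<and> (\<forall>c x. AE t in lborel. t > 0 \<longrightarrow> U (c *\<^sub>R x) t = complex_of_real c * U x t)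
   \<and> (\<forall>f::real \<Rightarrow> complex. f \<in> borel_measurable lborel
          \<and> set_integrable lborel {0<..} (\<lambda>t. (cmod (f t))\<^sup>2)
          \<longrightarrow> (\<exists>x. AE t in lborel. t > 0 \<longrightarrow> U x t = f t))"

definition kappa :: "('h::real_normed_vector \<Rightarrow> real \<Rightarrow> complex) \<Rightarrow> real \<Rightarrow> 'h \<Rightarrow> 'h" where
  "kappa U lam x = (THE z. AE t in lborel. t > 0 \<longrightarrow>
       U z t = complex_of_real (sqrt lam) * U x (lam * t))"

definition kappaL :: "('h::real_normed_vector \<Rightarrow> real \<Rightarrow> complex) \<Rightarrow> real \<Rightarrow> 'h \<Rightarrow>\<^sub>L 'h" where
  "kappaL U lam = Blinfun (kappa U lam)"

definition dirderiv :: "'a::real_normed_vector \<Rightarrow> ('a \<Rightarrow> 'b::real_normed_vector) \<Rightarrow> 'a \<Rightarrow> 'b" where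
  "dirderiv v f z = vector_derivative (\<lambda>t. f (z + t *\<^sub>R v)) (at 0)"

fun iter_deriv :: "'a::real_normed_vector list \<Rightarrow> ('a \<Rightarrow> 'b::real_normed_vector) \<Rightarrow> 'a \<Rightarrow> 'b" where
  "iter_deriv [] f = f"
| "iter_deriv (v # vs) f = dirderiv v (iter_deriv vs f)"

definition smooth_fun :: "('a::euclidean_space \<Rightarrow> 'b::real_normed_vector) \<Rightarrow> bool" where
  "smooth_fun f \<longleftrightarrow> (\<forall>vs. set vs \<subseteq> Basis \<longrightarrow>
      continuous_on UNIV (iter_deriv vs f)
      \<and> (\<forall>v\<in>Basis. \<forall>z. (\<lambda>t. iter_deriv vs f (z + t *\<^sub>R v)) differentiable (at 0)))"

definition bracket_fun :: "('a::euclidean_space \<Rightarrow> real) \<Rightarrow> bool" where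
  "bracket_fun br \<longleftrightarrow> smooth_fun br \<and> (\<forall>\<eta>. br \<eta> > 0) \<and> (\<forall>\<eta>. norm \<eta> \<ge> 1 \<longrightarrow> br \<eta> = norm \<eta>)"

text \<open>D^alpha_eta D^beta_y, with alpha, beta given as lists of basis directions.\<close>
definition Dsym :: "('q::finite) list \<Rightarrow> 'q list \<Rightarrow> ((real^'q) \<times> (real^'q) \<Rightarrow> 'b::real_normed_vector)
     \<Rightarrow> (real^'q) \<times> (real^'q) \<Rightarrow> 'b" where
  "Dsym al be f = iter_deriv (map (\<lambda>i. (0, axis i 1)) al @ map (\<lambda>i. (axis i 1, 0)) be) f"

definition sym_est :: "('h::real_normed_vector \<Rightarrow> real \<Rightarrow> complex) \<Rightarrow> (real^'q::finite \<Rightarrow> real) \<Rightarrow> real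
     \<Rightarrow> 'q list \<Rightarrow> 'q list \<Rightarrow> ((real^'q) \<times> (real^'q) \<Rightarrow> 'h \<Rightarrow>\<^sub>L 'h) \<Rightarrow> real \<Rightarrow> bool" where
  "sym_est U br \<mu> al be b C \<longleftrightarrow> (\<forall>y \<eta>.
      br \<eta> powr (real (length al) - \<mu>) *
        norm (kappaL U (1 / br \<eta>) o\<^sub>L Dsym al be b (y, \<eta>) o\<^sub>L kappaL U (br \<eta>)) \<le> C)"

definition symbol_class :: "('h::real_normed_vector \<Rightarrow> real \<Rightarrow> complex) \<Rightarrow> (real^'q::finite \<Rightarrow> real) \<Rightarrow> real
     \<Rightarrow> ((real^'q) \<times> (real^'q) \<Rightarrow> 'h \<Rightarrow>\<^sub>L 'h) \<Rightarrow> bool" where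
  "symbol_class U br \<mu> b \<longleftrightarrow> smooth_fun b \<and> (\<forall>al be. \<exists>C. sym_est U br \<mu> al be b C)"

definition bounded_family :: "('h::real_normed_vector \<Rightarrow> real \<Rightarrow> complex) \<Rightarrow> (real^'q::finite \<Rightarrow> real) \<Rightarrow> real
     \<Rightarrow> (real \<Rightarrow> (real^'q) \<times> (real^'q) \<Rightarrow> 'h \<Rightarrow>\<^sub>L 'h) \<Rightarrow> bool" where
  "bounded_family U br \<mu> A \<longleftrightarrow> (\<forall>h\<in>{0<..1}. symbol_class U br \<mu> (A h))
     \<and> (\<forall>al be. \<exists>C. \<forall>h\<in>{0<..1}. sym_est U br \<mu> al be (A h) C)"

text \<open>b_hbar(y,eta) = kappa_hbar^{-1} b(y, hbar eta) kappa_hbar, with kappa_hbar^{-1} = kappa_{1/hbar}.\<close>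
definition rescale :: "('h::real_normed_vector \<Rightarrow> real \<Rightarrow> complex) \<Rightarrow> real
     \<Rightarrow> ((real^'q::finite) \<times> (real^'q) \<Rightarrow> 'h \<Rightarrow>\<^sub>L 'h) \<Rightarrow> (real^'q) \<times> (real^'q) \<Rightarrow> 'h \<Rightarrow>\<^sub>L 'h" where
  "rescale U h b = (\<lambda>(y, \<eta>). kappaL U (1 / h) o\<^sub>L b (y, h *\<^sub>R \<eta>) o\<^sub>L kappaL U h)"

end

theory Submission
  imports Defs
begin

definition rep :: "('h::real_normed_vector \<Rightarrow> real \<Rightarrow> complex) \<Rightarrow> 'h \<Rightarrow> (real \<Rightarrow> complex) \<Rightarrow> bool" where
  "rep U x f \<longleftrightarrow> (AE t in lborel. t > 0 \<longrightarrow> U x t = f t)"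

lemma AE_scale:
  fixes lam :: real
  assumes lam: "lam > 0" and P: "AE s in lborel. Q s"
  shows "AE t in lborel. Q (lam * t)"
proof -
  from P obtain N where N: "{s \<in> space lborel. \<not> Q s} \<subseteq> N" "N \<in> sets lborel" "emeasure lborel N = 0"
    by (auto elim!: AE_E)
  have "AE s in lborel. s \<notin> N" using N by (intro AE_I[of _ _ N]) auto
  hence "AE s in density lborel (\<lambda>_. inverse \<bar>lam\<bar>). s \<notin> N"
    by (subst AE_density) (auto elim: AE_mp)
  hence "AE s in distr lborel borel ((*) lam). s \<notin> N"
    by (subst lborel_distr_mult) (use lam in auto)
  hence "AE t in lborel. lam * t \<notin> N"
    using N(2) by (subst (asm) AE_distr_iff) auto
  thus ?thesis using N(1) by (auto elim!: AE_mp)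
qed

lemma AE_scale_pos:
  fixes lam :: real
  assumes lam: "lam > 0" and P: "AE s in lborel. s > 0 \<longrightarrow> Q s"
  shows "AE t in lborel. t > 0 \<longrightarrow> Q (lam * t)"
  using AE_scale[OF lam P] lam by (auto elim!: AE_mp)

lemma rep_cong:
  assumes "rep U x f" "AE t in lborel. t > 0 \<longrightarrow> f t = g t"
  shows "rep U x g"
  using assms unfolding rep_def by (auto elim!: AE_mp)

lemma rep_unique:
  assumes M: "L2_model U" and "rep U x f" "rep U z f"
  shows "x = z"
proof -
  have add: "\<And>x y. AE t in lborel. t > 0 \<longrightarrow> U (x + y) t = U x t + U y t"
   and sc: "\<And>c x. AE t in lborel. t > 0 \<longrightarrow> U (c *\<^sub>R x) t = complex_of_real c * U x t"
   and meas: "\<And>x. U x \<in> borel_measurable lborel"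
   and nrm: "\<And>x. (norm x)\<^sup>2 = (LINT t:{0<..}|lborel. (cmod (U x t))\<^sup>2)"
    using M unfolding L2_model_def by auto
  have e: "x - z = x + (-1) *\<^sub>R z" by simp
  have "AE t in lborel. t > 0 \<longrightarrow> U (x - z) t = 0"
    using add[of x "(-1) *\<^sub>R z"] sc[of "-1" z] assms(2,3) unfolding e rep_def
    by (auto elim!: AE_mp)
  hence ae0: "AE t \<in> {0<..} in lborel. (cmod (U (x - z) t))\<^sup>2 = (\<lambda>t. 0) t"
    by (auto elim!: AE_mp)
  have mz[measurable]: "U (x - z) \<in> borel_measurable lborel" by (rule meas)
  have "(LINT t:{0<..}|lborel. (cmod (U (x - z) t))\<^sup>2) = (LINT t:{0::real<..}|lborel. (\<lambda>t. 0::real) t)"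
    apply (rule set_lebesgue_integral_cong_AE)
       apply measurable
    using ae0 by simp
  hence "(norm (x - z))\<^sup>2 = 0" using nrm[of "x - z"] by (simp add: set_lebesgue_integral_def)
  thus ?thesis by simp
qed

lemma scaled_L2:
  fixes lam :: real and g :: "real \<Rightarrow> complex"
  assumes lam: "lam > 0" and gm: "g \<in> borel_measurable lborel"
    and gi: "set_integrable lborel {0<..} (\<lambda>t. (cmod (g t))\<^sup>2)"
  shows "(\<lambda>t. complex_of_real (sqrt lam) * g (lam * t)) \<in> borel_measurable lborel"
    and "set_integrable lborel {0<..} (\<lambda>t. (cmod (complex_of_real (sqrt lam) * g (lam * t)))\<^sup>2)"
    and "(LINT t:{0<..}|lborel. (cmod (complex_of_real (sqrt lam) * g (lam * t)))\<^sup>2)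
         = (LINT t:{0<..}|lborel. (cmod (g t))\<^sup>2)"
proof -
  show "(\<lambda>t. complex_of_real (sqrt lam) * g (lam * t)) \<in> borel_measurable lborel"
    using gm by measurable
  define G where "G t = indicator {0<..} t *\<^sub>R (cmod (g t))\<^sup>2" for t :: real
  have GI: "integrable lborel G" using gi unfolding G_def set_integrable_def by simp
  have ind: "indicator {0<..} (lam * t) = (indicator {0<..} t :: real)" for t
    using lam by (auto simp: indicator_def zero_less_mult_iff)
  have eq: "indicator {0<..} t *\<^sub>R (cmod (complex_of_real (sqrt lam) * g (lam * t)))\<^sup>2
      = lam * G (0 + lam * t)" for t
    using lam by (simp add: G_def ind norm_mult power_mult_distrib)
  have "integrable lborel (\<lambda>t. G (0 + lam * t))"
    using lborel_integrable_real_affine[OF GI, of lam 0] lam by simp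
  hence "integrable lborel (\<lambda>t. lam * G (0 + lam * t))" by simp
  thus "set_integrable lborel {0<..} (\<lambda>t. (cmod (complex_of_real (sqrt lam) * g (lam * t)))\<^sup>2)"
    unfolding set_integrable_def eq .
  have "(LINT t:{0<..}|lborel. (cmod (complex_of_real (sqrt lam) * g (lam * t)))\<^sup>2)
      = (\<integral>t. lam * G (0 + lam * t) \<partial>lborel)"
    unfolding set_lebesgue_integral_def eq ..
  also have "\<dots> = lam * (\<integral>t. G (0 + lam * t) \<partial>lborel)" by simp
  also have "\<dots> = (\<integral>t. G t \<partial>lborel)"
    using lborel_integral_real_affine[of lam G 0] lam by simp
  finally show "(LINT t:{0<..}|lborel. (cmod (complex_of_real (sqrt lam) * g (lam * t)))\<^sup>2)
         = (LINT t:{0<..}|lborel. (cmod (g t))\<^sup>2)"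
    unfolding set_lebesgue_integral_def G_def .
qed

lemma L2_modelD:
  assumes "L2_model U"
  shows "U x \<in> borel_measurable lborel"
    and "set_integrable lborel {0<..} (\<lambda>t. (cmod (U x t))\<^sup>2)"
    and "(norm x)\<^sup>2 = (LINT t:{0<..}|lborel. (cmod (U x t))\<^sup>2)"
    and "AE t in lborel. t > 0 \<longrightarrow> U (x + y) t = U x t + U y t"
    and "AE t in lborel. t > 0 \<longrightarrow> U (c *\<^sub>R x) t = complex_of_real c * U x t"
    and "f \<in> borel_measurable lborel \<Longrightarrow> set_integrable lborel {0<..} (\<lambda>t. (cmod (f t))\<^sup>2)
          \<Longrightarrow> \<exists>x. rep U x f"
  using assms unfolding L2_model_def rep_def by blast+

lemma kappa_rep:
  assumes M: "L2_model U" and lam: "lam > 0"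
  shows "rep U (kappa U lam x) (\<lambda>t. complex_of_real (sqrt lam) * U x (lam * t))"
proof -
  note sl = scaled_L2[OF lam L2_modelD(1,2)[OF M]]
  obtain z where z: "rep U z (\<lambda>t. complex_of_real (sqrt lam) * U x (lam * t))"
    using L2_modelD(6)[OF M sl(1,2)] by blast
  have "kappa U lam x = z"
    unfolding kappa_def
  proof (rule the_equality)
    show "AE t in lborel. 0 < t \<longrightarrow> U z t = complex_of_real (sqrt lam) * U x (lam * t)"
      using z unfolding rep_def .
    fix w assume "AE t in lborel. 0 < t \<longrightarrow> U w t = complex_of_real (sqrt lam) * U x (lam * t)"
    thus "w = z" using rep_unique[OF M _ z] unfolding rep_def by blast
  qed
  thus ?thesis using z by simp
qed

lemma rep_norm:
  assumes M: "L2_model U" and r: "rep U z f" and fm[measurable]: "f \<in> borel_measurable lborel"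
  shows "(norm z)\<^sup>2 = (LINT t:{0<..}|lborel. (cmod (f t))\<^sup>2)"
proof -
  have [measurable]: "U z \<in> borel_measurable lborel" by (rule L2_modelD(1)[OF M])
  have "(norm z)\<^sup>2 = (LINT t:{0<..}|lborel. (cmod (U z t))\<^sup>2)" by (rule L2_modelD(3)[OF M])
  also have "\<dots> = (LINT t:{0::real<..}|lborel. (cmod (f t))\<^sup>2)"
    apply (rule set_lebesgue_integral_cong_AE)
       apply measurable
    using r unfolding rep_def by (auto elim!: AE_mp)
  finally show ?thesis .
qed

lemma kappa_norm:
  assumes M: "L2_model U" and lam: "lam > 0"
  shows "norm (kappa U lam x) = norm x"
proof -
  note sl = scaled_L2[OF lam L2_modelD(1,2)[OF M]]
  have "(norm (kappa U lam x))\<^sup>2 = (norm x)\<^sup>2"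
    using rep_norm[OF M kappa_rep[OF M lam] sl(1)] sl(3) L2_modelD(3)[OF M, of x] by simp
  thus ?thesis by (simp add: power2_eq_iff_nonneg)
qed

lemma kappa_add:
  assumes M: "L2_model U" and lam: "lam > 0"
  shows "kappa U lam (x + y) = kappa U lam x + kappa U lam y"
proof -
  have "rep U (kappa U lam x + kappa U lam y) (\<lambda>t. complex_of_real (sqrt lam) * U (x + y) (lam * t))"
    using L2_modelD(4)[OF M, of "kappa U lam x" "kappa U lam y"]
      kappa_rep[OF M lam, of x] kappa_rep[OF M lam, of y]
      AE_scale_pos[OF lam L2_modelD(4)[OF M, of x y]]
    unfolding rep_def by (auto elim!: AE_mp simp: algebra_simps)
  thus ?thesis using rep_unique[OF M kappa_rep[OF M lam, of "x + y"]] by blast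
qed

lemma kappa_scale:
  assumes M: "L2_model U" and lam: "lam > 0"
  shows "kappa U lam (c *\<^sub>R x) = c *\<^sub>R kappa U lam x"
proof -
  have "rep U (c *\<^sub>R kappa U lam x) (\<lambda>t. complex_of_real (sqrt lam) * U (c *\<^sub>R x) (lam * t))"
    using L2_modelD(5)[OF M, of c "kappa U lam x"]
      kappa_rep[OF M lam, of x]
      AE_scale_pos[OF lam L2_modelD(5)[OF M, of c x]]
    unfolding rep_def by (auto elim!: AE_mp simp: algebra_simps)
  thus ?thesis using rep_unique[OF M kappa_rep[OF M lam, of "c *\<^sub>R x"]] by blast
qed

lemma kappa_comp:
  assumes M: "L2_model U" and lam: "lam > 0" and mu: "mu > 0"
  shows "kappa U mu (kappa U lam x) = kappa U (lam * mu) x"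
proof -
  have "rep U (kappa U mu (kappa U lam x)) (\<lambda>t. complex_of_real (sqrt (lam * mu)) * U x ((lam * mu) * t))"
    using kappa_rep[OF M mu, of "kappa U lam x"]
      AE_scale_pos[OF mu kappa_rep[OF M lam, of x, unfolded rep_def]]
    unfolding rep_def by (auto elim!: AE_mp simp: algebra_simps real_sqrt_mult)
  thus ?thesis using rep_unique[OF M kappa_rep[OF M, of "lam * mu" x]] lam mu by simp
qed

lemma kappa_bl:
  assumes M: "L2_model U" and lam: "lam > 0"
  shows "bounded_linear (kappa U lam)"
  by (rule bounded_linear_intro[of _ 1])
     (auto simp: kappa_add[OF M lam] kappa_scale[OF M lam] kappa_norm[OF M lam])

lemma kappaL_apply:
  assumes M: "L2_model U" and lam: "lam > 0"
  shows "blinfun_apply (kappaL U lam) = kappa U lam"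
  unfolding kappaL_def by (rule bounded_linear_Blinfun_apply[OF kappa_bl[OF M lam]])

lemma kappaL_norm:
  assumes M: "L2_model U" and lam: "lam > 0"
  shows "norm (kappaL U lam) \<le> 1"
  by (rule norm_blinfun_bound) (auto simp: kappaL_apply[OF M lam] kappa_norm[OF M lam])

lemma kappaL_comp:
  assumes M: "L2_model U" and lam: "lam > 0" and mu: "mu > 0"
  shows "kappaL U mu o\<^sub>L kappaL U lam = kappaL U (lam * mu)"
  using lam mu
  by (intro blinfun_eqI) (simp add: kappaL_apply[OF M] kappa_comp[OF M])


definition Sc :: "real \<Rightarrow> ('a::real_vector \<times> 'a) \<Rightarrow> 'a \<times> 'a" where
  "Sc h z = (fst z, h *\<^sub>R snd z)"

definition sig :: "real \<Rightarrow> ('a::real_vector \<times> 'a) \<Rightarrow> real" where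
  "sig h v = (if fst v = 0 then h else 1)"

definition cnt :: "('a::real_vector \<times> 'a) list \<Rightarrow> nat" where
  "cnt vs = length (filter (\<lambda>v. fst v = 0) vs)"

lemma Sc_basis:
  fixes v :: "'a::euclidean_space \<times> 'a"
  assumes "v \<in> Basis"
  shows "Sc h (z + t *\<^sub>R v) = Sc h z + (sig h v * t) *\<^sub>R v"
proof -
  obtain u where u: "u \<in> Basis" "v = (u, 0) \<or> v = (0, u)" using assms unfolding Basis_prod_def by auto
  have "u \<noteq> 0" using u by auto
  thus ?thesis using u unfolding Sc_def sig_def
    by (cases z) (auto simp: algebra_simps)
qed

lemma hvd_step:
  fixes b :: "'a::euclidean_space \<times> 'a \<Rightarrow> 'b::real_normed_vector"
    and L :: "'b \<Rightarrow> 'c::real_normed_vector"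
  assumes bl: "bounded_linear L" and sm: "smooth_fun b" and vs: "set vs \<subseteq> Basis"
    and v: "v \<in> Basis"
    and IH: "\<And>z. iter_deriv vs G z = (h ^ cnt vs) *\<^sub>R L (iter_deriv vs b (Sc h z))"
  shows "((\<lambda>t. iter_deriv vs G (z + t *\<^sub>R v)) has_vector_derivative
           (h ^ cnt (v # vs)) *\<^sub>R L (iter_deriv (v # vs) b (Sc h z))) (at 0)"
proof -
  define \<psi> where "\<psi> s = iter_deriv vs b (Sc h z + s *\<^sub>R v)" for s
  define D where "D = iter_deriv (v # vs) b (Sc h z)"
  have "\<psi> differentiable (at 0)" using sm vs v unfolding smooth_fun_def \<psi>_def by blast
  hence d\<psi>: "(\<psi> has_vector_derivative D) (at 0)"
    unfolding D_def \<psi>_def by (simp add: dirderiv_def vector_derivative_works)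
  have dm: "((\<lambda>t. sig h v * t) has_vector_derivative sig h v) (at 0)"
    by (auto intro!: derivative_eq_intros simp: has_real_derivative_iff_has_vector_derivative[symmetric])
  have "((\<psi> \<circ> (\<lambda>t. sig h v * t)) has_vector_derivative (sig h v *\<^sub>R D)) (at 0)"
    by (rule vector_diff_chain_at[OF dm]) (simp add: d\<psi>)
  moreover have "bounded_linear (\<lambda>x. (h ^ cnt vs) *\<^sub>R L x)"
    using bl by (intro bounded_linear_compose[OF bounded_linear_scaleR_right bl])
  ultimately have "((\<lambda>t. (h ^ cnt vs) *\<^sub>R L ((\<psi> \<circ> (\<lambda>t. sig h v * t)) t)) has_vector_derivative
         (h ^ cnt vs) *\<^sub>R L (sig h v *\<^sub>R D)) (at 0)"
    by (rule bounded_linear.has_vector_derivative[rotated])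
  moreover have "(\<lambda>t. (h ^ cnt vs) *\<^sub>R L ((\<psi> \<circ> (\<lambda>t. sig h v * t)) t)) = (\<lambda>t. iter_deriv vs G (z + t *\<^sub>R v))"
    by (rule ext) (simp add: IH \<psi>_def Sc_basis[OF v])
  moreover have "(h ^ cnt vs) *\<^sub>R L (sig h v *\<^sub>R D) = (h ^ cnt (v # vs)) *\<^sub>R L D"
    by (simp add: cnt_def sig_def linear_simps[OF bl])
  ultimately show ?thesis unfolding D_def by simp
qed

lemma iter_deriv_Sc:
  fixes b :: "'a::euclidean_space \<times> 'a \<Rightarrow> 'b::real_normed_vector"
    and L :: "'b \<Rightarrow> 'c::real_normed_vector"
  assumes bl: "bounded_linear L" and sm: "smooth_fun b" and vs: "set vs \<subseteq> Basis"
  shows "iter_deriv vs (\<lambda>z. L (b (Sc h z))) z = (h ^ cnt vs) *\<^sub>R L (iter_deriv vs b (Sc h z))"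
  using vs
proof (induction vs arbitrary: z)
  case Nil
  then show ?case by (simp add: cnt_def)
next
  case (Cons v vs)
  have "((\<lambda>t. iter_deriv vs (\<lambda>z. L (b (Sc h z))) (z + t *\<^sub>R v)) has_vector_derivative
           (h ^ cnt (v # vs)) *\<^sub>R L (iter_deriv (v # vs) b (Sc h z))) (at 0)"
    using Cons by (intro hvd_step[OF bl sm]) auto
  thus ?case by (simp add: dirderiv_def vector_derivative_at)
qed

lemma smooth_Sc:
  fixes b :: "'a::euclidean_space \<times> 'a \<Rightarrow> 'b::real_normed_vector"
    and L :: "'b \<Rightarrow> 'c::real_normed_vector"
  assumes bl: "bounded_linear L" and sm: "smooth_fun b"
  shows "smooth_fun (\<lambda>z. L (b (Sc h z)))"
  unfolding smooth_fun_def
proof (intro allI impI conjI ballI)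
  fix vs :: "('a \<times> 'a) list" assume vs: "set vs \<subseteq> Basis"
  have "continuous_on UNIV (iter_deriv vs b)" using sm vs unfolding smooth_fun_def by blast
  moreover have "continuous_on UNIV (Sc h :: 'a \<times> 'a \<Rightarrow> _)"
    unfolding Sc_def by (intro continuous_intros)
  ultimately have "continuous_on UNIV (\<lambda>z. iter_deriv vs b (Sc h z))"
    by (rule continuous_on_compose2) auto
  hence "continuous_on UNIV (\<lambda>z. (h ^ cnt vs) *\<^sub>R L (iter_deriv vs b (Sc h z)))"
    by (intro continuous_on_scaleR continuous_on_const bounded_linear.continuous_on[OF bl])
  thus "continuous_on UNIV (iter_deriv vs (\<lambda>z. L (b (Sc h z))))"
    using iter_deriv_Sc[OF bl sm vs] by simp
  fix v :: "'a \<times> 'a" and z assume v: "v \<in> Basis"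
  show "(\<lambda>t. iter_deriv vs (\<lambda>z. L (b (Sc h z))) (z + t *\<^sub>R v)) differentiable at 0"
    by (rule differentiableI_vector[OF hvd_step[OF bl sm vs v iter_deriv_Sc[OF bl sm vs]]])
qed


lemma bracket_ratio:
  fixes br :: "real^'q::finite \<Rightarrow> real"
  assumes br: "bracket_fun br"
  shows "\<exists>c\<ge>1. \<forall>h \<eta>. 0 < h \<longrightarrow> h \<le> 1 \<longrightarrow> h * br \<eta> \<le> c * br (h *\<^sub>R \<eta>)"
proof -
  have pos: "\<And>\<eta>. br \<eta> > 0" and big: "\<And>\<eta>. norm \<eta> \<ge> 1 \<Longrightarrow> br \<eta> = norm \<eta>"
    using br unfolding bracket_fun_def by auto
  have cont: "continuous_on UNIV br"
    using br unfolding bracket_fun_def smooth_fun_def by (metis empty_subsetI iter_deriv.simps(1) list.set(1))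
  have contc: "continuous_on (cball 0 1) br" using cont continuous_on_subset by blast
  obtain x1 where x1: "x1 \<in> cball 0 1" "\<And>y. y \<in> cball 0 1 \<Longrightarrow> br x1 \<le> br y"
    using continuous_attains_inf[of "cball (0::real^'q) 1" br] contc by auto
  obtain x2 where x2: "x2 \<in> cball 0 1" "\<And>y. y \<in> cball 0 1 \<Longrightarrow> br y \<le> br x2"
    using continuous_attains_sup[of "cball (0::real^'q) 1" br] contc by auto
  define m where "m = br x1"
  define M where "M = br x2"
  have m: "m > 0" using pos m_def by auto
  define c where "c = max 1 (max (1/m) (M/m))"
  have c1: "c \<ge> 1" "1/m \<le> c" "M/m \<le> c" unfolding c_def by auto
  have "h * br \<eta> \<le> c * br (h *\<^sub>R \<eta>)" if h: "0 < h" "h \<le> 1" for h \<eta>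
  proof -
    have nh: "norm (h *\<^sub>R \<eta>) = h * norm \<eta>" using h by simp
    have P: "br (h *\<^sub>R \<eta>) > 0" by (rule pos)
    show ?thesis
    proof (cases "norm (h *\<^sub>R \<eta>) \<ge> 1")
      case True
      have "h * norm \<eta> \<le> norm \<eta>" using h by (intro mult_left_le_one_le) auto
      hence "norm \<eta> \<ge> 1" using True nh by linarith
      hence "h * br \<eta> = br (h *\<^sub>R \<eta>)" using big[OF True] big[OF \<open>norm \<eta> \<ge> 1\<close>] nh h by simp
      also have "\<dots> \<le> c * br (h *\<^sub>R \<eta>)" using c1 P by simp
      finally show ?thesis .
    next
      case False
      have mle: "m \<le> br (h *\<^sub>R \<eta>)" using x1(2)[of "h *\<^sub>R \<eta>"] False m_def by (simp add: dist_norm)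
      have "h * br \<eta> \<le> max 1 M"
      proof (cases "norm \<eta> \<ge> 1")
        case True
        thus ?thesis using big[OF True] nh False h by simp
      next
        case F2: False
        have "br \<eta> \<le> M" using x2(2)[of \<eta>] F2 M_def by (simp add: dist_norm)
        moreover have "h * br \<eta> \<le> br \<eta>" using h pos[of \<eta>] by (intro mult_left_le_one_le) auto
        ultimately show ?thesis by simp
      qed
      also have "max 1 M \<le> c * m"
        using c1 m by (auto simp: field_simps)
      also have "c * m \<le> c * br (h *\<^sub>R \<eta>)" using mle c1 by simp
      finally show ?thesis .
    qed
  qed
  thus ?thesis using c1 by blast
qed


definition Lh :: "('h::real_normed_vector \<Rightarrow> real \<Rightarrow> complex) \<Rightarrow> real \<Rightarrow> ('h \<Rightarrow>\<^sub>L 'h) \<Rightarrow> 'h \<Rightarrow>\<^sub>L 'h" where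
  "Lh U h X = kappaL U (1 / h) o\<^sub>L X o\<^sub>L kappaL U h"

lemma Lh_bl: "bounded_linear (Lh U h)"
  unfolding Lh_def
  by (intro bounded_linear_compose[OF bounded_bilinear.bounded_linear_left[OF bounded_bilinear_blinfun_compose]]
      bounded_bilinear.bounded_linear_right[OF bounded_bilinear_blinfun_compose])

lemma rescale_eq: "rescale U h b = (\<lambda>z. Lh U h (b (Sc h z)))"
  unfolding rescale_def Lh_def Sc_def by (auto simp: case_prod_beta)

lemma Dsym_list:
  "set (map (\<lambda>i. (0::real^'q::finite, axis i (1::real))) al @ map (\<lambda>i. (axis i 1, 0)) be) \<subseteq> Basis"
  "cnt (map (\<lambda>i. (0::real^'q::finite, axis i (1::real))) al @ map (\<lambda>i. (axis i 1, 0)) be) = length al"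
  unfolding Basis_prod_def cnt_def by (auto simp: filter_map o_def)

lemma Dsym_rescale:
  assumes sm: "smooth_fun b"
  shows "Dsym al be (rescale U h b) (y, \<eta>) = (h ^ length al) *\<^sub>R Lh U h (Dsym al be b (y, h *\<^sub>R \<eta>))"
  unfolding Dsym_def rescale_eq
  by (subst iter_deriv_Sc[OF Lh_bl sm Dsym_list(1)]) (simp add: Dsym_list(2) Sc_def)

lemma smooth_rescale:
  assumes sm: "smooth_fun b"
  shows "smooth_fun (rescale U h b)"
  unfolding rescale_eq by (rule smooth_Sc[OF Lh_bl sm])

lemma main_est:
  fixes br :: "real^'q::finite \<Rightarrow> real" and b :: "(real^'q) \<times> (real^'q) \<Rightarrow> 'h::real_normed_vector \<Rightarrow>\<^sub>L 'h"
  assumes M: "L2_model U" and br: "bracket_fun br"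
    and c: "c \<ge> 1" "\<forall>h \<eta>. 0 < h \<longrightarrow> h \<le> 1 \<longrightarrow> h * br \<eta> \<le> c * br (h *\<^sub>R \<eta>)"
    and h: "0 < h" "h \<le> 1" and sm: "smooth_fun b"
    and est: "sym_est U br 0 al be b C"
  shows "sym_est U br 0 al be (rescale U h b) (c ^ length al * C)"
  unfolding sym_est_def
proof (intro allI)
  fix y \<eta>
  define k where "k = length al"
  define B where "B = br \<eta>"
  define B' where "B' = br (h *\<^sub>R \<eta>)"
  define D where "D = Dsym al be b (y, h *\<^sub>R \<eta>)"
  define Mid where "Mid = kappaL U (1 / B') o\<^sub>L D o\<^sub>L kappaL U B'"
  define \<rho> where "\<rho> = B' / (h * B)"
  have pos: "\<And>\<eta>. br \<eta> > 0" using br unfolding bracket_fun_def by auto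
  have B: "B > 0" "B' > 0" unfolding B_def B'_def by (auto intro: pos)
  hence \<rho>: "\<rho> > 0" using h unfolding \<rho>_def by auto
  have ka: "\<And>l. l > 0 \<Longrightarrow> blinfun_apply (kappaL U l) = kappa U l" by (rule kappaL_apply[OF M])
  have n1: "\<And>l. l > 0 \<Longrightarrow> norm (kappaL U l) \<le> 1" by (rule kappaL_norm[OF M])
  have e1: "1 / h * (1 / B) = 1 / B' * \<rho>" and e2: "B * h = 1 / \<rho> * B'"
    using B h unfolding \<rho>_def by (auto simp: field_simps)
  have eq: "kappaL U (1 / B) o\<^sub>L Dsym al be (rescale U h b) (y, \<eta>) o\<^sub>L kappaL U B
      = (h ^ k) *\<^sub>R (kappaL U \<rho> o\<^sub>L Mid o\<^sub>L kappaL U (1 / \<rho>))"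
  proof (rule blinfun_eqI)
    fix x
    have "kappa U (1 / B) (kappa U (1 / h) w) = kappa U \<rho> (kappa U (1 / B') w)" for w
    proof -
      have "kappa U (1 / B) (kappa U (1 / h) w) = kappa U (1 / h * (1 / B)) w"
        using B h by (intro kappa_comp[OF M]) auto
      also have "\<dots> = kappa U (1 / B' * \<rho>) w" by (simp only: e1)
      also have "\<dots> = kappa U \<rho> (kappa U (1 / B') w)"
        using B \<rho> by (intro kappa_comp[OF M, symmetric]) auto
      finally show ?thesis .
    qed
    moreover have "kappa U h (kappa U B x) = kappa U B' (kappa U (1 / \<rho>) x)"
    proof -
      have "kappa U h (kappa U B x) = kappa U (B * h) x"
        using B h by (intro kappa_comp[OF M]) auto
      also have "\<dots> = kappa U (1 / \<rho> * B') x" by (simp only: e2)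
      also have "\<dots> = kappa U B' (kappa U (1 / \<rho>) x)"
        using B \<rho> by (intro kappa_comp[OF M, symmetric]) auto
      finally show ?thesis .
    qed
    ultimately show "blinfun_apply (kappaL U (1 / B) o\<^sub>L Dsym al be (rescale U h b) (y, \<eta>) o\<^sub>L kappaL U B) x
      = blinfun_apply ((h ^ k) *\<^sub>R (kappaL U \<rho> o\<^sub>L Mid o\<^sub>L kappaL U (1 / \<rho>))) x"
      using B h \<rho>
      by (simp add: Dsym_rescale[OF sm] Lh_def ka Mid_def D_def k_def kappa_scale[OF M] scaleR_blinfun.rep_eq)
  qed
  have nX: "norm (kappaL U \<rho> o\<^sub>L Mid o\<^sub>L kappaL U (1 / \<rho>)) \<le> norm Mid"
  proof -
    have "norm (kappaL U \<rho> o\<^sub>L Mid o\<^sub>L kappaL U (1 / \<rho>)) \<le> norm (kappaL U \<rho> o\<^sub>L Mid) * norm (kappaL U (1 / \<rho>))"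
      by (rule norm_blinfun_compose)
    also have "\<dots> \<le> norm (kappaL U \<rho> o\<^sub>L Mid) * 1"
      using n1[of "1/\<rho>"] \<rho> by (intro mult_left_mono) auto
    also have "\<dots> \<le> norm (kappaL U \<rho>) * norm Mid" using norm_blinfun_compose by simp
    also have "\<dots> \<le> 1 * norm Mid" using n1[OF \<rho>] by (intro mult_right_mono) auto
    finally show ?thesis by simp
  qed
  have estM: "B' ^ k * norm Mid \<le> C"
  proof -
    have "B' powr real k * norm Mid \<le> C"
      using est unfolding sym_est_def Mid_def D_def B'_def k_def by simp
    thus ?thesis using B by (simp add: powr_realpow)
  qed
  have hB: "h * B \<le> c * B'" using c h unfolding B_def B'_def by auto
  have "B ^ k * norm (kappaL U (1 / B) o\<^sub>L Dsym al be (rescale U h b) (y, \<eta>) o\<^sub>L kappaL U B)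
      = B ^ k * (h ^ k * norm (kappaL U \<rho> o\<^sub>L Mid o\<^sub>L kappaL U (1 / \<rho>)))"
    unfolding eq using h by simp
  also have "\<dots> \<le> B ^ k * (h ^ k * norm Mid)"
    using nX B h by (intro mult_left_mono) auto
  also have "\<dots> = (h * B) ^ k * norm Mid" by (simp add: power_mult_distrib)
  also have "\<dots> \<le> (c * B') ^ k * norm Mid"
    using hB B h by (intro mult_right_mono power_mono) auto
  also have "\<dots> = c ^ k * (B' ^ k * norm Mid)" by (simp add: power_mult_distrib)
  also have "\<dots> \<le> c ^ k * C" using estM c by (intro mult_left_mono) auto
  finally show "br \<eta> powr (real (length al) - 0) *
        norm (kappaL U (1 / br \<eta>) o\<^sub>L Dsym al be (rescale U h b) (y, \<eta>) o\<^sub>L kappaL U (br \<eta>))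
        \<le> c ^ length al * C"
    using B unfolding B_def k_def by (simp add: powr_realpow)
qed


theorem lemma2p17:
  fixes U :: "'h::real_normed_vector \<Rightarrow> real \<Rightarrow> complex"
    and br :: "real^'q::finite \<Rightarrow> real"
    and a :: "real \<Rightarrow> (real^'q) \<times> (real^'q) \<Rightarrow> 'h \<Rightarrow>\<^sub>L 'h"
  assumes "L2_model U"
    and "bracket_fun br"
    and "bounded_family U br 0 a"
  shows "bounded_family U br 0 (\<lambda>h. rescale U h (a h))
    \<and> (\<forall>al be :: 'q list. \<exists>K N. \<forall>(b :: (real^'q) \<times> (real^'q) \<Rightarrow> 'h \<Rightarrow>\<^sub>L 'h) C h.
          h \<in> {0<..1} \<longrightarrow> symbol_class U br 0 b \<longrightarrow>
          (\<forall>al' be' :: 'q list. length al' + length be' \<le> N \<longrightarrow> sym_est U br 0 al' be' b C) \<longrightarrow>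
          sym_est U br 0 al be (rescale U h b) (K * C))"
proof -
  note M = assms(1) and br = assms(2)
  obtain c where c: "c \<ge> 1" "\<forall>h \<eta>. 0 < h \<longrightarrow> h \<le> 1 \<longrightarrow> h * br \<eta> \<le> c * br (h *\<^sub>R \<eta>)"
    using bracket_ratio[OF br] by blast
  have key: "sym_est U br 0 al be (rescale U h b) (c ^ length al * C)"
    if "h \<in> {0<..1}" "symbol_class U br 0 b" "sym_est U br 0 al be b C"
    for h and b :: "(real^'q) \<times> (real^'q) \<Rightarrow> 'h \<Rightarrow>\<^sub>L 'h" and C al be
    using that by (intro main_est[OF M br c]) (auto simp: symbol_class_def)
  have sc: "symbol_class U br 0 (rescale U h b)"
    if hb: "h \<in> {0<..1}" "symbol_class U br 0 b" for h and b :: "(real^'q) \<times> (real^'q) \<Rightarrow> 'h \<Rightarrow>\<^sub>L 'h"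
  proof -
    have "smooth_fun (rescale U h b)"
      using hb by (intro smooth_rescale) (auto simp: symbol_class_def)
    moreover have "\<exists>C. sym_est U br 0 al be (rescale U h b) C" for al be
    proof -
      obtain C where "sym_est U br 0 al be b C" using hb(2) unfolding symbol_class_def by blast
      thus ?thesis using key[OF hb] by blast
    qed
    ultimately show ?thesis unfolding symbol_class_def by blast
  qed
  have P1: "bounded_family U br 0 (\<lambda>h. rescale U h (a h))"
    unfolding bounded_family_def
  proof (intro conjI ballI allI)
    fix h :: real assume "h \<in> {0<..1}"
    thus "symbol_class U br 0 (rescale U h (a h))"
      using assms(3) unfolding bounded_family_def by (intro sc) auto
  next
    fix al be :: "'q list"
    obtain C where C: "\<forall>h\<in>{0<..1}. sym_est U br 0 al be (a h) C"
      using assms(3) unfolding bounded_family_def by blast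
    have "\<forall>h\<in>{0<..1}. sym_est U br 0 al be (rescale U h (a h)) (c ^ length al * C)"
      using C assms(3) unfolding bounded_family_def by (auto intro!: key)
    thus "\<exists>C. \<forall>h\<in>{0<..1}. sym_est U br 0 al be (rescale U h (a h)) C" by blast
  qed
  have P2: "\<exists>K N. \<forall>(b :: (real^'q) \<times> (real^'q) \<Rightarrow> 'h \<Rightarrow>\<^sub>L 'h) C h.
          h \<in> {0<..1} \<longrightarrow> symbol_class U br 0 b \<longrightarrow>
          (\<forall>al' be' :: 'q list. length al' + length be' \<le> N \<longrightarrow> sym_est U br 0 al' be' b C) \<longrightarrow>
          sym_est U br 0 al be (rescale U h b) (K * C)" for al be :: "'q list"
    by (rule exI[of _ "c ^ length al"], rule exI[of _ "length al + length be"]) (auto intro: key)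
  show ?thesis using P1 P2 by blast
qed


end
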